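(* Let $f_0, g_0 \in \mathbb{C}[z]$ be polynomials of equal length having nonzero constant coefficients. Let $\sigma_0,\sigma_1,\ldots$ be a sequence of values from $\{-1,1\}$, and define $f_n, g_n$ recursively for all $n \in \mathbb{N}$ by \[ f_{n+1}(z) = f_n(z)+\sigma_n z^{\operatorname{len} f_n} f_n^\dagger(-z), \qquad g_{n+1}(z) = g_n(z)+\sigma_n z^{\operatorname{len} g_n} g_n^\dagger(-z). \] Then \begin{align*} \lim_{n \to \infty} \mathrm{ADF}(f_n) & = -1 + \frac{2}{3} \cdot \frac{\|f_0\|_4^4+ \|f_0 \widetilde{f}_0\|_2^2}{ \|f_0\|_2^4} \geq \frac{1}{3}, \\ \lim_{n \to \infty} \mathrm{ADF}(g_n) & = -1 + \frac{2}{3} \cdot \frac{\|g_0\|_4^4+ \|g_0 \widetilde{g}_0\|_2^2}{ \|g_0\|_2^4} \geq \frac{1}{3}, \\ \lim_{n \to \infty} \mathrm{CDF}(f_n,g_n) & = \frac{2 \|f_0 g_0\|_2^2+\|f_0 \widetilde{g}_0\|_2^2 + \operatorname{Re} \int f_0 \widetilde{f}_0 \overline{g_0 \widetilde{g}_0}}{3 \|f_0\|_2^2 \|g_0\|_2^2}, \end{align*} and consequently \begin{align*} \lim_{n \to\infty} \mathrm{PSC}(f_n,g_n) ={}& \frac{2 \|f_0 g_0\|_2^2+\|f_0 \widetilde{g}_0\|_2^2 + \operatorname{Re} \int f_0 \widetilde{f}_0 \overline{g_0 \widetilde{g}_0}}{3 \|f_0\|_2^2 \|g_0\|_2^2} \\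 &+ \frac{\sqrt{\left(2\|f_0\|_4^4+2 \|f_0 \widetilde{f}_0\|_2^2-3\|f_0\|_2^4\right) \left(2\|g_0\|_4^4+2\|g_0 \widetilde{g}_0\|_2^2-3\|g_0\|_2^4\right)}}{3 \|f_0\|_2^2 \|g_0\|_2^2}. \end{align*}
   Context: A polynomial $a(z)=a_0+a_1z+\cdots+a_dz^d\in\mathbb{C}[z]$ of degree $d$ is identified with the sequence $(a_0,\ldots,a_d)$; its length is $\operatorname{len} a = 1+\deg a$. Its conjugate reciprocal is $a^\dagger(z)=\overline{a_d}+\overline{a_{d-1}}z+\cdots+\overline{a_0}z^d$, and $f_n^\dagger(-z)$ means $(f_n^\dagger)$ evaluated at $-z$. For a Laurent polynomial $a(z)=\sum_j a_j z^j$: $\widetilde{a}(z)=a(-z)$; $\overline{a(z)}=\sum_j \overline{a_j} z^{-j}$ (conjugation on the unit circle); $\int a$ denotes the constant coefficient $a_0=\frac{1}{2\pi}\int_0^{2\pi}a(e^{i\theta})\,d\theta$; and for $p\ge1$, $\|a\|_p=\left(\frac{1}{2\pi}\int_0^{2\pi}|a(e^{i\theta})|^p d\theta\right)^{1/p}$. For sequences $f,g$ of equal length, the aperiodic crosscorrelation is $C_{f,g}(s)=\sum_j f_{j+s}\overline{g_j}$ (terms outside the index range are $0$); the crosscorrelation demerit factor is $\mathrm{CDF}(f,g)=\sum_{s}|C_{f,g}(s)|^2/(|C_{f,f}(0)||C_{g,g}(0)|)$, which equals $\|fg\|_2^2/(\|f\|_2^2\|g\|_2^2)$; the autocorrelation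 demerit factor is $\mathrm{ADF}(f)=\mathrm{CDF}(f,f)-1=\|f\|_4^4/\|f\|_2^4-1$; and the Pursley–Sarwate Criterion is $\mathrm{PSC}(f,g)=\sqrt{\mathrm{ADF}(f)\mathrm{ADF}(g)}+\mathrm{CDF}(f,g)$. *)

theory Defs
  imports "HOL-Analysis.Analysis" "HOL-Computational_Algebra.Polynomial"
begin

definition plen :: "complex poly \<Rightarrow> nat" where
  "plen a = Suc (degree a)"

definition cdagger :: "complex poly \<Rightarrow> complex poly" where
  "cdagger a = (\<Sum>j\<le>degree a. monom (cnj (coeff a (degree a - j))) j)"

definition ptilde :: "complex poly \<Rightarrow> complex poly" where
  "ptilde a = pcompose a [:0, -1:]"

definition lpnorm :: "real \<Rightarrow> complex poly \<Rightarrow> real" where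
  "lpnorm p a = ((1 / (2 * pi)) * integral {0..2*pi} (\<lambda>\<theta>. norm (poly a (cis \<theta>)) powr p)) powr (1 / p)"

definition circ_int_conj :: "complex poly \<Rightarrow> complex poly \<Rightarrow> complex" where
  "circ_int_conj a b = (1 / (2 * pi)) * integral {0..2*pi} (\<lambda>\<theta>. poly a (cis \<theta>) * cnj (poly b (cis \<theta>)))"

definition icoeff :: "complex poly \<Rightarrow> int \<Rightarrow> complex" where
  "icoeff a k = (if k < 0 then 0 else coeff a (nat k))"

definition crosscorr :: "complex poly \<Rightarrow> complex poly \<Rightarrow> int \<Rightarrow> complex" where
  "crosscorr f g s = (\<Sum>j<max (plen f) (plen g). icoeff f (int j + s) * cnj (icoeff g (int j)))"

definition CDF :: "complex poly \<Rightarrow> complex poly \<Rightarrow> real" where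
  "CDF f g = (\<Sum>s\<in>{- int (max (plen f) (plen g)) .. int (max (plen f) (plen g))}.
                 (cmod (crosscorr f g s))\<^sup>2)
             / (cmod (crosscorr f f 0) * cmod (crosscorr g g 0))"

definition ADF :: "complex poly \<Rightarrow> real" where
  "ADF f = CDF f f - 1"

definition PSC :: "complex poly \<Rightarrow> complex poly \<Rightarrow> real" where
  "PSC f g = sqrt (ADF f * ADF g) + CDF f g"

end

theory Submission
  imports Defs
begin

lemma cis_int_integral:
  fixes k :: int
  shows "((\<lambda>t. cis (of_int k * t)) has_integral (if k = 0 then 2*pi else 0)) {0..2*pi}"
proof (cases "k = 0")
  case True then show ?thesis using has_integral_const[of "1::complex" 0 "2*pi"] 
    by (simp add: scaleR_conv_of_real)
next
  case False
  have d: "((\<lambda>t. cis (of_int k * t) / (\<i> * of_int k)) has_vector_derivative cis (of_int k * t)) (at t within {0..2*pi})" for t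
  proof -
    have "((\<lambda>z. exp (\<i> * of_int k * z) / (\<i> * of_int k)) has_field_derivative (\<i> * of_int k) * exp (\<i> * of_int k * of_real t) / (\<i> * of_int k)) (at (of_real t))"
      by (auto intro!: derivative_eq_intros)
    from has_vector_derivative_real_field[OF this, of "{0..2*pi}"] False
    show ?thesis by (simp add: cis_conv_exp mult.assoc)
  qed
  have "((\<lambda>t. cis (of_int k * t)) has_integral (cis (of_int k * (2*pi)) / (\<i> * of_int k) - cis (of_int k * 0) / (\<i> * of_int k))) {0..2*pi}"
    by (rule fundamental_theorem_of_calculus) (auto intro: d)
  moreover have "cis (of_int k * (2*pi)) = 1"
    by (metis cis_multiple_2pi mult.commute Ints_of_int)
  ultimately show ?thesis using False by simp
qed

lemma poly_cis_sum:
  assumes "degree p \<le> N"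
  shows "poly p (cis t) = (\<Sum>i\<le>N. coeff p i * cis (of_nat i * t))"
proof -
  have "poly p (cis t) = (\<Sum>i\<le>degree p. coeff p i * cis t ^ i)" by (rule poly_altdef)
  also have "\<dots> = (\<Sum>i\<le>N. coeff p i * cis t ^ i)"
    by (rule sum.mono_neutral_left) (use assms in \<open>auto simp: coeff_eq_0\<close>)
  finally show ?thesis by (simp only: Complex.DeMoivre)
qed

lemma parseval:
  assumes "degree p \<le> N" "degree q \<le> N"
  shows "circ_int_conj p q = (\<Sum>k\<le>N. coeff p k * cnj (coeff q k))"
proof -
  have eq: "poly p (cis t) * cnj (poly q (cis t)) =
     (\<Sum>i\<le>N. \<Sum>j\<le>N. (coeff p i * cnj (coeff q j)) * cis (of_int (int i - int j) * t))" for t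
    unfolding poly_cis_sum[OF assms(1)] poly_cis_sum[OF assms(2)]
    apply (simp add: sum_distrib_left sum_distrib_right)
    apply (subst sum.swap)
    apply (intro sum.cong refl)
    apply (simp add: cis_cnj cis_mult algebra_simps)
    done
  have hi: "((\<lambda>t. \<Sum>i\<le>N. \<Sum>j\<le>N. (coeff p i * cnj (coeff q j)) * cis (of_int (int i - int j) * t))
     has_integral (\<Sum>i\<le>N. \<Sum>j\<le>N. (coeff p i * cnj (coeff q j)) * (if int i - int j = 0 then 2*pi else 0))) {0..2*pi}"
    by (intro has_integral_sum finite_atMost has_integral_mult_right cis_int_integral)
  have "(\<Sum>i\<le>N. \<Sum>j\<le>N. (coeff p i * cnj (coeff q j)) * (if int i - int j = 0 then 2*pi else 0))
       = (\<Sum>i\<le>N. (coeff p i * cnj (coeff q i)) * (2*pi))"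
  proof (rule sum.cong[OF refl])
    fix i assume i: "i \<in> {..N}"
    have "(\<Sum>j\<le>N. (coeff p i * cnj (coeff q j)) * (if int i - int j = 0 then 2*pi else 0))
       = (\<Sum>j\<le>N. if j = i then (coeff p i * cnj (coeff q j)) * (2*pi) else 0)"
      by (rule sum.cong) auto
    also have "\<dots> = (coeff p i * cnj (coeff q i)) * (2*pi)" using i by simp
    finally show "(\<Sum>j\<le>N. (coeff p i * cnj (coeff q j)) * (if int i - int j = 0 then 2*pi else 0))
       = (coeff p i * cnj (coeff q i)) * (2*pi)" .
  qed
  with hi have "integral {0..2*pi} (\<lambda>t. poly p (cis t) * cnj (poly q (cis t)))
      = (\<Sum>i\<le>N. (coeff p i * cnj (coeff q i)) * (2*pi))"
    unfolding eq by (simp add: integral_unique)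
  then show ?thesis unfolding circ_int_conj_def
    by (simp add: sum_distrib_right[symmetric])
qed

definition circI :: "(complex \<Rightarrow> complex) \<Rightarrow> complex" where
  "circI (\<phi>::complex\<Rightarrow>complex) = complex_of_real (1 / (2*pi)) * integral {0..2*pi} (\<lambda>t. \<phi> (cis t))"

lemma cont_cis: "continuous_on S cis"
  unfolding cis_conv_exp[abs_def] by (intro continuous_intros)

lemma neg_cis: "- cis t = cis (t + pi)"
  by (simp add: complex_eq_iff cos_add sin_add)

lemma circI_integrable: assumes "continuous_on UNIV (\<phi>::complex\<Rightarrow>complex)" shows "(\<lambda>t. \<phi> (cis t)) integrable_on {a..b}"
proof -
  have "continuous_on {a..b} (\<lambda>t. \<phi> (cis t))"
    using continuous_on_compose2[OF assms cont_cis] by auto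
  then show ?thesis by (rule integrable_continuous_real)
qed

lemma circI_add: "continuous_on UNIV \<phi> \<Longrightarrow> continuous_on UNIV \<psi> \<Longrightarrow> circI (\<lambda>z. \<phi> z + \<psi> z) = circI \<phi> + circI \<psi>"
  unfolding circI_def by (simp add: integral_add circI_integrable distrib_left)

lemma circI_diff: "continuous_on UNIV \<phi> \<Longrightarrow> continuous_on UNIV \<psi> \<Longrightarrow> circI (\<lambda>z. \<phi> z - \<psi> z) = circI \<phi> - circI \<psi>"
  unfolding circI_def by (simp add: integral_diff circI_integrable right_diff_distrib)

lemma circI_cmult: "circI (\<lambda>z. c * \<phi> z) = c * circI \<phi>"
  unfolding circI_def by simp

lemma circI_cnj: "circI (\<lambda>z. cnj (\<phi> z)) = cnj (circI \<phi>)"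
  unfolding circI_def by (simp add: integral_cnj[symmetric])

lemma circI_cong: "(\<And>z. norm z = 1 \<Longrightarrow> \<phi> z = \<psi> z) \<Longrightarrow> circI \<phi> = circI \<psi>"
  unfolding circI_def by simp

lemma circI_cic: "circ_int_conj a b = circI (\<lambda>z. poly a z * cnj (poly b z))"
  unfolding circI_def circ_int_conj_def ..

lemma circI_real:
  assumes "continuous_on UNIV h"
  shows "circI (\<lambda>z. complex_of_real (h z)) = complex_of_real ((1/(2*pi)) * integral {0..2*pi} (\<lambda>t. h (cis t)))"
proof -
  have "continuous_on {0..2*pi} (\<lambda>t. h (cis t))"
    using continuous_on_compose2[OF assms cont_cis] by auto
  then have "(\<lambda>t. h (cis t)) integrable_on {0..2*pi}" by (rule integrable_continuous_real)
  then have "((\<lambda>t. complex_of_real (h (cis t))) has_integral of_real (integral {0..2*pi} (\<lambda>t. h (cis t)))) {0..2*pi}"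
    by (intro has_integral_of_real) auto
  then show ?thesis unfolding circI_def by (simp add: integral_unique)
qed

lemma integral_shift_pi:
  fixes g :: "real \<Rightarrow> complex"
  assumes cont: "continuous_on UNIV g" and per: "\<And>t. g (t + 2*pi) = g t"
  shows "integral {0..2*pi} (\<lambda>t. g (t + pi)) = integral {0..2*pi} g"
proof -
  have int: "\<And>a b. g integrable_on {a..b}"
    by (intro integrable_continuous_real continuous_on_subset[OF cont]) auto
  have int2: "\<And>a b. (\<lambda>t. g (t + pi)) integrable_on {a..b}"
    by (intro integrable_continuous_real continuous_on_compose2[OF cont]) (auto intro!: continuous_intros)
  have sh: "\<And>a b c. integral {a..b} (\<lambda>t. g (t + c)) = integral {a+c..b+c} g"
  proof -
    fix a b c
    have "integral (cbox a b) (g \<circ> (+) c) = integral (cbox (a+c) (b+c)) g"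
      by (rule integral_shift_cbox_plus)
    then show "integral {a..b} (\<lambda>t. g (t + c)) = integral {a+c..b+c} g"
      by (simp add: o_def add.commute)
  qed
  have "integral {0..2*pi} (\<lambda>t. g (t + pi)) = integral {0..pi} (\<lambda>t. g (t + pi)) + integral {pi..2*pi} (\<lambda>t. g (t + pi))"
    using Henstock_Kurzweil_Integration.integral_combine[where a=0 and c=pi and b="2*pi" and f="\<lambda>t. g (t + pi)"] int2 by (simp add: pi_ge_zero)
  also have "integral {0..pi} (\<lambda>t. g (t + pi)) = integral {pi..2*pi} g"
    using sh[of 0 pi pi] by simp
  also have "integral {pi..2*pi} (\<lambda>t. g (t + pi)) = integral {0..pi} g"
  proof -
    have e: "g (t + pi) = g (t + -pi)" for t
    proof -
      have "t + pi = (t + -pi) + 2*pi" by simp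
      then show ?thesis by (metis per)
    qed
    have "integral {pi..2*pi} (\<lambda>t. g (t + pi)) = integral {pi..2*pi} (\<lambda>t. g (t + (-pi)))" by (simp only: e)
    also have "\<dots> = integral {0..pi} g" using sh[of pi "2*pi" "-pi"] by simp
    finally show ?thesis .
  qed
  also have "integral {pi..2*pi} g + integral {0..pi} g = integral {0..2*pi} g"
  proof -
    have "integral {0..pi} g + integral {pi..2*pi} g = integral {0..2*pi} g"
      using Henstock_Kurzweil_Integration.integral_combine[where a=0 and c=pi and b="2*pi" and f=g] int by (simp add: pi_ge_zero)
    then show ?thesis by (metis add.commute)
  qed
  finally show ?thesis .
qed

lemma circI_neg:
  assumes "continuous_on UNIV \<phi>"
  shows "circI (\<lambda>z. \<phi> (- z)) = circI \<phi>"
proof -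
  have "integral {0..2*pi} (\<lambda>t. \<phi> (- cis t)) = integral {0..2*pi} (\<lambda>t. \<phi> (cis (t + pi)))"
    by (simp add: neg_cis)
  also have "\<dots> = integral {0..2*pi} (\<lambda>t. \<phi> (cis t))"
    by (rule integral_shift_pi[where g="\<lambda>t. \<phi> (cis t)"])
       (auto intro!: continuous_on_compose2[OF assms cont_cis] simp: cis_mult[symmetric])
  finally show ?thesis unfolding circI_def by simp
qed

lemma circI_odd:
  assumes "continuous_on UNIV \<phi>" "\<And>z. \<phi> (- z) = - \<phi> z"
  shows "circI \<phi> = 0"
proof -
  have "circI \<phi> = circI (\<lambda>z. \<phi> (- z))" using circI_neg[OF assms(1)] by simp
  also have "\<dots> = - circI \<phi>" unfolding assms(2) using circI_cmult[of "-1" \<phi>] by simp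
  finally show ?thesis by simp
qed

lemma cic_low_zero:
  assumes "degree a < m" "\<And>k. k < m \<Longrightarrow> coeff b k = 0"
  shows "circ_int_conj a b = 0" "circ_int_conj b a = 0"
proof -
  let ?N = "max (degree a) (degree b)"
  have z1: "\<And>k. coeff a k * cnj (coeff b k) = 0" and z2: "\<And>k. coeff b k * cnj (coeff a k) = 0"
    using assms by (metis coeff_eq_0 complex_cnj_zero mult_zero_left mult_zero_right not_less less_le_trans)+
  show "circ_int_conj a b = 0" 
    by (subst parseval[of _ ?N]) (auto intro!: sum.neutral simp del: mult_eq_0_iff simp: z1)
  show "circ_int_conj b a = 0" 
    by (subst parseval[of _ ?N]) (auto intro!: sum.neutral simp del: mult_eq_0_iff simp: z2)
qed

lemma sum_atMost_flip: "(\<Sum>j\<le>d. f (d - j)) = (\<Sum>j\<le>(d::nat). f j)"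
  by (rule sum.reindex_bij_witness[of _ "\<lambda>j. d - j" "\<lambda>j. d - j"]) auto

lemma coeff_cdagger:
  "coeff (cdagger p) j = (if j \<le> degree p then cnj (coeff p (degree p - j)) else 0)"
proof -
  have "coeff (cdagger p) j = (\<Sum>i\<le>degree p. if i = j then cnj (coeff p (degree p - i)) else 0)"
    unfolding cdagger_def coeff_sum coeff_monom by (intro sum.cong) auto
  also have "\<dots> = (if j \<le> degree p then cnj (coeff p (degree p - j)) else 0)"
    by (simp add: sum.delta')
  finally show ?thesis .
qed

lemma degree_cdagger_le: "degree (cdagger p) \<le> degree p"
  by (rule degree_le) (auto simp: coeff_cdagger)

lemma degree_cdagger: "coeff p 0 \<noteq> 0 \<Longrightarrow> degree (cdagger p) = degree p"
  by (intro antisym degree_cdagger_le le_degree) (simp add: coeff_cdagger)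

lemma cnj_circle: assumes "norm z = 1" shows "cnj z = inverse z"
proof -
  have "z * cnj z = 1" using complex_norm_square[of z] assms by simp
  then show ?thesis by (simp add: field_simps divide_inverse[symmetric] eq_divide_eq)
qed

lemma cnj_poly_circle:
  assumes "norm z = 1"
  shows "cnj (poly p z) = (\<Sum>i\<le>degree p. cnj (coeff p i) * inverse z ^ i)"
proof -
  have "cnj z = inverse z" using assms by (rule cnj_circle)
  then show ?thesis by (simp add: poly_altdef)
qed

lemma poly_cdagger:
  assumes "norm z = 1"
  shows "poly (cdagger p) z = z ^ degree p * cnj (poly p z)"
proof -
  have z0: "z \<noteq> 0" using assms by auto
  have "poly (cdagger p) z = (\<Sum>j\<le>degree p. cnj (coeff p (degree p - j)) * z ^ j)"
    unfolding cdagger_def by (simp add: poly_sum poly_monom)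
  also have "\<dots> = (\<Sum>j\<le>degree p. cnj (coeff p j) * z ^ (degree p - j))"
    using sum_atMost_flip[of "\<lambda>j. cnj (coeff p j) * z ^ (degree p - j)" "degree p"] by simp
  also have "\<dots> = (\<Sum>j\<le>degree p. z ^ degree p * (cnj (coeff p j) * inverse z ^ j))"
  proof (intro sum.cong refl)
    fix j assume "j \<in> {..degree p}"
    then have "z ^ (degree p - j) = z ^ degree p * inverse z ^ j"
      using z0 by (simp add: power_diff divide_inverse power_inverse)
    then show "cnj (coeff p j) * z ^ (degree p - j) = z ^ degree p * (cnj (coeff p j) * inverse z ^ j)"
      by (simp only: mult_ac)
  qed
  also have "\<dots> = z ^ degree p * cnj (poly p z)"
    by (simp add: cnj_poly_circle[OF assms] sum_distrib_left)
  finally show ?thesis .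
qed

lemma poly_ptilde: "poly (ptilde p) z = poly p (- z)"
  unfolding ptilde_def by (simp add: poly_pcompose)

lemma coeff_ptilde: "coeff (ptilde p) k = (-1) ^ k * coeff p k"
proof (induction p arbitrary: k)
  case 0 then show ?case by (simp add: ptilde_def)
next
  case (pCons a p)
  show ?case
  proof (cases k)
    case 0 then show ?thesis by (simp add: ptilde_def pcompose_pCons)
  next
    case (Suc j)
    have "coeff (ptilde (pCons a p)) k = - coeff (ptilde p) j"
      using Suc by (simp add: ptilde_def pcompose_pCons coeff_pCons)
    then show ?thesis using pCons.IH[of j] Suc by simp
  qed
qed

lemma degree_ptilde: "degree (ptilde p) = degree p"
  unfolding ptilde_def by (simp add: degree_pcompose)

lemma ptilde_ptilde: "ptilde (ptilde p) = p"
  by (rule poly_eqI) (simp add: coeff_ptilde)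

lemma ptilde_mult: "ptilde (p * q) = ptilde p * ptilde q"
  unfolding ptilde_def by (rule pcompose_mult)

definition Hh :: "complex poly \<Rightarrow> complex poly" where
  "Hh p = monom 1 (plen p) * ptilde (cdagger p)"

lemma aux_ring: "x = a * d \<Longrightarrow> b = m * d \<Longrightarrow> a * (b * c) = m * x * (c::complex)"
  by simp

lemma poly_Hh:
  assumes "norm z = 1"
  shows "poly (Hh p) z = (-1) ^ degree p * z ^ (2 * degree p + 1) * cnj (poly p (- z))"
proof -
  have "norm (-z) = 1" using assms by simp
  then have "poly (Hh p) z = z ^ Suc (degree p) * ((- z) ^ degree p * cnj (poly p (- z)))"
    unfolding Hh_def plen_def by (simp add: poly_monom poly_ptilde poly_cdagger)
  also have "\<dots> = (-1) ^ degree p * z ^ (2 * degree p + 1) * cnj (poly p (- z))"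
  proof -
    have e: "2 * degree p + 1 = Suc (degree p) + degree p" by simp
    have "z ^ (2 * degree p + 1) = z ^ Suc (degree p) * z ^ degree p"
      by (simp only: e power_add)
    moreover have "(- z) ^ degree p = (-1) ^ degree p * z ^ degree p" by (rule power_minus)
    ultimately show ?thesis by (rule aux_ring)
  qed
  finally show ?thesis .
qed

lemma coeff_Hh: "coeff (Hh p) k = (if k < plen p then 0 else coeff (ptilde (cdagger p)) (k - plen p))"
  unfolding Hh_def by (simp add: coeff_monom_mult)

lemma degree_Hh_le: "degree (Hh p) \<le> 2 * degree p + 1"
proof (rule degree_le, intro allI impI)
  fix k assume "2 * degree p + 1 < k"
  then have "k - plen p > degree (cdagger p)" using degree_cdagger_le[of p] by (simp add: plen_def)
  then have "coeff (ptilde (cdagger p)) (k - plen p) = 0"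
    by (simp add: coeff_eq_0 degree_ptilde)
  then show "coeff (Hh p) k = 0" by (simp add: coeff_Hh)
qed

lemma coeff_Hh_top: "coeff (Hh p) (2 * degree p + 1) = (-1) ^ degree p * cnj (coeff p 0)"
proof -
  have "coeff (Hh p) (2 * degree p + 1) = coeff (ptilde (cdagger p)) (degree p)"
    by (simp add: coeff_Hh plen_def)
  also have "\<dots> = (-1) ^ degree p * coeff (cdagger p) (degree p)" by (rule coeff_ptilde)
  also have "coeff (cdagger p) (degree p) = cnj (coeff p 0)" by (simp add: coeff_cdagger)
  finally show ?thesis by simp
qed

lemma alg_P:
  fixes a b c e w ep :: complex
  assumes w: "w * cnj w = 1" and ep: "ep * ep = 1" "cnj ep = ep"
  shows "(a + ep*w*cnj b)*(c + ep*w*cnj e) * cnj ((a + ep*w*cnj b)*(c + ep*w*cnj e)) =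
     a*cnj a*(c*cnj c) + a*cnj a*(e*cnj e) + b*cnj b*(c*cnj c) + b*cnj b*(e*cnj e)
   + ep * ((a*cnj a + b*cnj b) * (cnj w*(c*e) + w*cnj (c*e)) + (cnj w*(a*b) + w*cnj (a*b)) * (c*cnj c + e*cnj e))
   + cnj w ^ 2 * (a*b*c*e) + a*b*cnj (c*e) + cnj (a*b)*(c*e) + w ^ 2 * cnj (a*b*c*e)"
proof -
  have "(a + ep*w*cnj b)*(c + ep*w*cnj e) * cnj ((a + ep*w*cnj b)*(c + ep*w*cnj e)) =
     (a + ep*w*cnj b)*(c + ep*w*cnj e) * ((cnj a + ep*cnj w*b)*(cnj c + ep*cnj w*e))"
    using ep by simp
  also have "\<dots> = a*cnj a*(c*cnj c) + a*cnj a*(e*cnj e) + b*cnj b*(c*cnj c) + b*cnj b*(e*cnj e)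
   + ep * ((a*cnj a + b*cnj b) * (cnj w*(c*e) + w*(cnj c * cnj e)) + (cnj w*(a*b) + w*(cnj a * cnj b)) * (c*cnj c + e*cnj e))
   + cnj w ^ 2 * (a*b*c*e) + a*b*(cnj c * cnj e) + (cnj a * cnj b)*(c*e) + w ^ 2 * (cnj a * cnj b * cnj c * cnj e)"
    using w ep(1) by algebra
  finally show ?thesis by simp
qed

lemma I_P: "circI (\<lambda>z. poly F z * cnj (poly F z) * (poly G z * cnj (poly G z))) = circ_int_conj (F*G) (F*G)"
  unfolding circI_cic by (rule circI_cong) (simp add: mult_ac)

lemma I_Q: "circI (\<lambda>z. poly F z * cnj (poly F z) * (poly G (-z) * cnj (poly G (-z)))) = circ_int_conj (F * ptilde G) (F * ptilde G)"
  unfolding circI_cic by (rule circI_cong) (simp add: mult_ac poly_ptilde)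

lemma I_Qs: "circI (\<lambda>z. poly F (-z) * cnj (poly F (-z)) * (poly G z * cnj (poly G z))) = circ_int_conj (F * ptilde G) (F * ptilde G)"
proof -
  have c: "continuous_on UNIV (\<lambda>z. poly F z * cnj (poly F z) * (poly G (-z) * cnj (poly G (-z))))" by (intro continuous_intros)
  have "circI (\<lambda>z. poly F (-z) * cnj (poly F (-z)) * (poly G z * cnj (poly G z))) = circI (\<lambda>z. poly F z * cnj (poly F z) * (poly G (-z) * cnj (poly G (-z))))"
    using circI_neg[OF c] by simp
  then show ?thesis using I_Q by simp
qed

lemma I_Ps: "circI (\<lambda>z. poly F (-z) * cnj (poly F (-z)) * (poly G (-z) * cnj (poly G (-z)))) = circ_int_conj (F*G) (F*G)"
proof -
  have c: "continuous_on UNIV (\<lambda>z. poly F z * cnj (poly F z) * (poly G z * cnj (poly G z)))" by (intro continuous_intros)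
  have "circI (\<lambda>z. poly F (-z) * cnj (poly F (-z)) * (poly G (-z) * cnj (poly G (-z)))) = circI (\<lambda>z. poly F z * cnj (poly F z) * (poly G z * cnj (poly G z)))"
    using circI_neg[OF c] by simp
  then show ?thesis using I_P by simp
qed

lemma I_R: "circI (\<lambda>z. poly F z * poly F (-z) * cnj (poly G z * poly G (-z))) = circ_int_conj (F * ptilde F) (G * ptilde G)"
  unfolding circI_cic by (rule circI_cong) (simp add: mult_ac poly_ptilde)

lemma I_Rc: "circI (\<lambda>z. cnj (poly F z * poly F (-z)) * (poly G z * poly G (-z))) = cnj (circ_int_conj (F * ptilde F) (G * ptilde G))"
proof -
  have "circI (\<lambda>z. cnj (poly F z * poly F (-z)) * (poly G z * poly G (-z)))
      = circI (\<lambda>z. cnj (poly F z * poly F (-z) * cnj (poly G z * poly G (-z))))" by simp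
  also have "\<dots> = cnj (circI (\<lambda>z. poly F z * poly F (-z) * cnj (poly G z * poly G (-z))))" by (rule circI_cnj)
  finally show ?thesis using I_R by simp
qed

lemma I_N: "circI (\<lambda>z. poly F z * cnj (poly F z)) = circ_int_conj F F"
  unfolding circI_cic ..

lemma I_Ns: "circI (\<lambda>z. poly F (-z) * cnj (poly F (-z))) = circ_int_conj F F"
proof -
  have c: "continuous_on UNIV (\<lambda>z. poly F z * cnj (poly F z))" by (intro continuous_intros)
  have "circI (\<lambda>z. poly F (-z) * cnj (poly F (-z))) = circI (\<lambda>z. poly F z * cnj (poly F z))"
    using circI_neg[OF c] by simp
  then show ?thesis using I_N by simp
qed

lemma degree_prod4: 
  assumes "degree F \<le> d" "degree G \<le> d"
  shows "degree (F * ptilde F * G * ptilde G) \<le> 4 * d"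
proof -
  have "degree (F * ptilde F * G * ptilde G) \<le> degree F + degree (ptilde F) + degree G + degree (ptilde G)"
    by (meson add_le_mono degree_mult_le dual_order.trans order_refl)
  then show ?thesis using assms by (simp add: degree_ptilde)
qed

lemma I_Z:
  assumes "degree F \<le> d" "degree G \<le> d"
  shows "circI (\<lambda>z. cnj (z ^ (2*d+1)) ^ 2 * (poly F z * poly F (-z) * poly G z * poly G (-z))) = 0"
proof -
  have "circ_int_conj (F * ptilde F * G * ptilde G) (monom 1 ((2*d+1)*2)) = 0"
    by (rule cic_low_zero(1)[where m="(2*d+1)*2"]) (use degree_prod4[OF assms] in \<open>auto simp: coeff_monom\<close>)
  moreover have "circ_int_conj (F * ptilde F * G * ptilde G) (monom 1 ((2*d+1)*2))
     = circI (\<lambda>z. cnj (z ^ (2*d+1)) ^ 2 * (poly F z * poly F (-z) * poly G z * poly G (-z)))"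
    unfolding circI_cic
  proof (rule circI_cong)
    fix z :: complex
    have pw: "cnj (poly (monom 1 ((2*d+1)*2)) z) = cnj (z ^ (2*d+1)) ^ 2"
    proof -
      have "cnj (poly (monom 1 ((2*d+1)*2)) z) = cnj (z ^ ((2*d+1)*2))" by (simp add: poly_monom)
      also have "\<dots> = cnj ((z ^ (2*d+1)) ^ 2)" by (simp only: power_mult)
      also have "\<dots> = cnj (z ^ (2*d+1)) ^ 2" by (simp only: complex_cnj_power)
      finally show ?thesis .
    qed
    show "poly (F * ptilde F * G * ptilde G) z * cnj (poly (monom 1 ((2*d+1)*2)) z)
      = cnj (z ^ (2*d+1)) ^ 2 * (poly F z * poly F (-z) * poly G z * poly G (-z))"
      by (simp only: pw poly_mult poly_ptilde) (simp only: mult_ac)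
  qed
  ultimately show ?thesis by simp
qed

lemma I_Zc:
  assumes "degree F \<le> d" "degree G \<le> d"
  shows "circI (\<lambda>z. (z ^ (2*d+1)) ^ 2 * cnj (poly F z * poly F (-z) * poly G z * poly G (-z))) = 0"
proof -
  have "circI (\<lambda>z. (z ^ (2*d+1)) ^ 2 * cnj (poly F z * poly F (-z) * poly G z * poly G (-z)))
     = circI (\<lambda>z. cnj (cnj (z ^ (2*d+1)) ^ 2 * (poly F z * poly F (-z) * poly G z * poly G (-z))))" by simp
  also have "\<dots> = cnj (circI (\<lambda>z. cnj (z ^ (2*d+1)) ^ 2 * (poly F z * poly F (-z) * poly G z * poly G (-z))))"
    by (rule circI_cnj)
  finally show ?thesis using I_Z[OF assms] by simp
qed

lemma I_W:
  assumes "degree F \<le> d"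
  shows "circI (\<lambda>z. cnj (z ^ (2*d+1)) * (poly F z * poly F (-z))) = 0"
    "circI (\<lambda>z. z ^ (2*d+1) * cnj (poly F z * poly F (-z))) = 0"
proof -
  have dg: "degree (F * ptilde F) \<le> 2 * d"
    using degree_mult_le[of F "ptilde F"] assms by (simp add: degree_ptilde)
  have "circ_int_conj (F * ptilde F) (monom 1 (2*d+1)) = 0"
    by (rule cic_low_zero(1)[where m="2*d+1"]) (use dg in \<open>auto simp: coeff_monom\<close>)
  moreover have "circ_int_conj (F * ptilde F) (monom 1 (2*d+1))
     = circI (\<lambda>z. cnj (z ^ (2*d+1)) * (poly F z * poly F (-z)))"
    unfolding circI_cic by (rule circI_cong) (simp add: poly_monom poly_ptilde mult_ac)
  ultimately show 1: "circI (\<lambda>z. cnj (z ^ (2*d+1)) * (poly F z * poly F (-z))) = 0" by simp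
  have "circI (\<lambda>z. z ^ (2*d+1) * cnj (poly F z * poly F (-z)))
     = circI (\<lambda>z. cnj (cnj (z ^ (2*d+1)) * (poly F z * poly F (-z))))" by simp
  also have "\<dots> = 0" unfolding circI_cnj 1 by simp
  finally show "circI (\<lambda>z. z ^ (2*d+1) * cnj (poly F z * poly F (-z))) = 0" .
qed

lemma poly_step:
  assumes "norm z = 1"
  shows "poly (F + smult (complex_of_real s) (Hh F)) z
       = poly F z + complex_of_real (s * (-1) ^ degree F) * z ^ (2 * degree F + 1) * cnj (poly F (- z))"
  using poly_Hh[OF assms, of F] by (simp add: mult_ac)

lemma w_circle: "norm z = 1 \<Longrightarrow> z ^ n * cnj (z ^ n) = 1"
  using complex_norm_square[of "z ^ n"] by (simp add: norm_power)

lemma alg_P2: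
  fixes a b c e w :: complex and e1 e2 :: real
  assumes w: "w * cnj w = 1" and ep: "e1 * e1 = 1" "e2 * e2 = 1"
  shows "(a + of_real e1*w*cnj b)*(c + of_real e2*w*cnj e) * cnj ((a + of_real e1*w*cnj b)*(c + of_real e2*w*cnj e)) =
     a*cnj a*(c*cnj c) + a*cnj a*(e*cnj e) + b*cnj b*(c*cnj c) + b*cnj b*(e*cnj e)
   + of_real e2 * ((a*cnj a + b*cnj b) * (cnj w*(c*e) + w*cnj (c*e)))
   + of_real e1 * ((cnj w*(a*b) + w*cnj (a*b)) * (c*cnj c + e*cnj e))
   + of_real (e1*e2) * (cnj w ^ 2 * (a*b*c*e) + a*b*cnj (c*e) + cnj (a*b)*(c*e) + w ^ 2 * cnj (a*b*c*e))"
proof -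
  define x1 where "x1 = complex_of_real e1"
  define x2 where "x2 = complex_of_real e2"
  have x: "x1 * x1 = 1" "x2 * x2 = 1" "cnj x1 = x1" "cnj x2 = x2" "complex_of_real (e1*e2) = x1 * x2"
    using ep unfolding x1_def x2_def by (simp_all flip: of_real_mult)
  have "(a + x1*w*cnj b)*(c + x2*w*cnj e) * cnj ((a + x1*w*cnj b)*(c + x2*w*cnj e)) =
     (a + x1*w*cnj b)*(c + x2*w*cnj e) * ((cnj a + x1*cnj w*b)*(cnj c + x2*cnj w*e))"
    using x by simp
  also have "\<dots> = a*cnj a*(c*cnj c) + a*cnj a*(e*cnj e) + b*cnj b*(c*cnj c) + b*cnj b*(e*cnj e)
   + x2 * ((a*cnj a + b*cnj b) * (cnj w*(c*e) + w*(cnj c * cnj e)))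
   + x1 * ((cnj w*(a*b) + w*(cnj a * cnj b)) * (c*cnj c + e*cnj e))
   + (x1*x2) * (cnj w ^ 2 * (a*b*c*e) + a*b*(cnj c * cnj e) + (cnj a * cnj b)*(c*e) + w ^ 2 * (cnj a * cnj b * cnj c * cnj e))"
    using w x(1,2) by algebra
  finally show ?thesis unfolding x1_def[symmetric] x2_def[symmetric] x(5) by simp
qed

lemma I_O1:
  "circI (\<lambda>z. (poly F z * cnj (poly F z) + poly F (-z) * cnj (poly F (-z))) *
     (cnj (z^(2*d+1)) * (poly G z * poly G (-z)) + z^(2*d+1) * cnj (poly G z * poly G (-z)))) = 0"
proof (rule circI_odd)
  show "continuous_on UNIV (\<lambda>z. (poly F z * cnj (poly F z) + poly F (-z) * cnj (poly F (-z))) *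
     (cnj (z^(2*d+1)) * (poly G z * poly G (-z)) + z^(2*d+1) * cnj (poly G z * poly G (-z))))"
    by (intro continuous_intros)
  fix z :: complex
  have o: "(- z) ^ (2*d+1) = - (z ^ (2*d+1))" by (simp add: power_minus_odd)
  show "(poly F (- z) * cnj (poly F (- z)) + poly F (- (- z)) * cnj (poly F (- (- z)))) *
     (cnj ((- z)^(2*d+1)) * (poly G (- z) * poly G (- (- z))) + (- z)^(2*d+1) * cnj (poly G (- z) * poly G (- (- z))))
     = - ((poly F z * cnj (poly F z) + poly F (-z) * cnj (poly F (-z))) *
     (cnj (z^(2*d+1)) * (poly G z * poly G (-z)) + z^(2*d+1) * cnj (poly G z * poly G (-z))))"
    unfolding o minus_minus complex_cnj_minus by (simp add: algebra_simps)
qed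

lemma I_O2:
  "circI (\<lambda>z. (cnj (z^(2*d+1)) * (poly F z * poly F (-z)) + z^(2*d+1) * cnj (poly F z * poly F (-z))) *
     (poly G z * cnj (poly G z) + poly G (-z) * cnj (poly G (-z)))) = 0"
proof (rule circI_odd)
  show "continuous_on UNIV (\<lambda>z. (cnj (z^(2*d+1)) * (poly F z * poly F (-z)) + z^(2*d+1) * cnj (poly F z * poly F (-z))) *
     (poly G z * cnj (poly G z) + poly G (-z) * cnj (poly G (-z))))"
    by (intro continuous_intros)
  fix z :: complex
  have o: "(- z) ^ (2*d+1) = - (z ^ (2*d+1))" by (simp add: power_minus_odd)
  show "(cnj ((- z)^(2*d+1)) * (poly F (- z) * poly F (- (- z))) + (- z)^(2*d+1) * cnj (poly F (- z) * poly F (- (- z)))) *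
     (poly G (- z) * cnj (poly G (- z)) + poly G (- (- z)) * cnj (poly G (- (- z))))
     = - ((cnj (z^(2*d+1)) * (poly F z * poly F (-z)) + z^(2*d+1) * cnj (poly F z * poly F (-z))) *
     (poly G z * cnj (poly G z) + poly G (-z) * cnj (poly G (-z))))"
    unfolding o minus_minus complex_cnj_minus by (simp add: algebra_simps)
qed

lemma step_P:
  fixes F G F2 G2 :: "complex poly" and e1 e2 :: real
  assumes dF: "degree F \<le> d" and dG: "degree G \<le> d"
    and e: "e1 * e1 = 1" "e2 * e2 = 1"
    and hF: "\<And>z. norm z = 1 \<Longrightarrow> poly F2 z = poly F z + of_real e1 * z^(2*d+1) * cnj (poly F (-z))"
    and hG: "\<And>z. norm z = 1 \<Longrightarrow> poly G2 z = poly G z + of_real e2 * z^(2*d+1) * cnj (poly G (-z))"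
  shows "circ_int_conj (F2*G2) (F2*G2) = 2 * circ_int_conj (F*G) (F*G) + 2 * circ_int_conj (F * ptilde G) (F * ptilde G)
     + of_real (e1*e2) * (circ_int_conj (F * ptilde F) (G * ptilde G) + cnj (circ_int_conj (F * ptilde F) (G * ptilde G)))"
proof -
  have "circ_int_conj (F2*G2) (F2*G2) = circI (\<lambda>z.
     poly F z * cnj (poly F z) * (poly G z * cnj (poly G z)) + poly F z * cnj (poly F z) * (poly G (-z) * cnj (poly G (-z)))
   + poly F (-z) * cnj (poly F (-z)) * (poly G z * cnj (poly G z)) + poly F (-z) * cnj (poly F (-z)) * (poly G (-z) * cnj (poly G (-z)))
   + of_real e2 * ((poly F z * cnj (poly F z) + poly F (-z) * cnj (poly F (-z))) *
     (cnj (z^(2*d+1)) * (poly G z * poly G (-z)) + z^(2*d+1) * cnj (poly G z * poly G (-z))))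
   + of_real e1 * ((cnj (z^(2*d+1)) * (poly F z * poly F (-z)) + z^(2*d+1) * cnj (poly F z * poly F (-z))) *
     (poly G z * cnj (poly G z) + poly G (-z) * cnj (poly G (-z))))
   + of_real (e1*e2) * (cnj (z^(2*d+1)) ^ 2 * (poly F z * poly F (-z) * poly G z * poly G (-z))
     + poly F z * poly F (-z) * cnj (poly G z * poly G (-z)) + cnj (poly F z * poly F (-z)) * (poly G z * poly G (-z))
     + (z^(2*d+1)) ^ 2 * cnj (poly F z * poly F (-z) * poly G z * poly G (-z))))"
    unfolding circI_cic
    apply (rule circI_cong)
    apply (simp only: poly_mult hF hG)
    apply (rule alg_P2[OF w_circle e]; assumption)
    done
  also have "\<dots> = 2 * circ_int_conj (F*G) (F*G) + 2 * circ_int_conj (F * ptilde G) (F * ptilde G)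
     + of_real (e1*e2) * (circ_int_conj (F * ptilde F) (G * ptilde G) + cnj (circ_int_conj (F * ptilde F) (G * ptilde G)))"
    apply (subst circI_add; (intro continuous_intros)?)+
    apply (subst circI_cmult)+
    apply (subst circI_add; (intro continuous_intros)?)+
    apply (simp only: I_P I_Q I_Qs I_Ps I_R I_Rc I_O1 I_O2 I_Z[OF dF dG] I_Zc[OF dF dG])
    apply (simp add: algebra_simps)
    done
  finally show ?thesis .
qed

lemma alg_R:
  fixes a b c f w :: complex and e :: real
  assumes w: "w * cnj w = 1" and ep: "e * e = 1"
  shows "(a + of_real e*w*cnj b)*(b - of_real e*w*cnj a) * cnj ((c + of_real e*w*cnj f)*(f - of_real e*w*cnj c)) =
    a*b*cnj(c*f) + cnj(a*b)*(c*f) + a*cnj a*(c*cnj c) - a*cnj a*(f*cnj f) - b*cnj b*(c*cnj c) + b*cnj b*(f*cnj f)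
  - cnj w^2*(a*b*c*f) - w^2*cnj(a*b*c*f)
  + of_real e * ((cnj w * ((a*cnj a - b*cnj b)*(c*f)) - cnj (cnj w * ((a*cnj a - b*cnj b)*(c*f))))
       - (cnj w * ((a*b)*(c*cnj c - f*cnj f)) - cnj (cnj w * ((a*b)*(c*cnj c - f*cnj f)))))"
proof -
  define x where "x = complex_of_real e"
  have x: "x * x = 1" "cnj x = x"
    using ep unfolding x_def by (simp_all flip: of_real_mult)
  have "(a + x*w*cnj b)*(b - x*w*cnj a) * cnj ((c + x*w*cnj f)*(f - x*w*cnj c)) =
    (a + x*w*cnj b)*(b - x*w*cnj a) * ((cnj c + x*cnj w*f)*(cnj f - x*cnj w*c))"
    using x by simp
  also have "\<dots> = a*b*(cnj c*cnj f) + (cnj a*cnj b)*(c*f) + a*cnj a*(c*cnj c) - a*cnj a*(f*cnj f) - b*cnj b*(c*cnj c) + b*cnj b*(f*cnj f)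
  - cnj w^2*(a*b*c*f) - w^2*(cnj a*cnj b*cnj c*cnj f)
  + x * ((cnj w * ((a*cnj a - b*cnj b)*(c*f)) - (w * ((cnj a*a - cnj b*b)*(cnj c*cnj f))))
       - (cnj w * ((a*b)*(c*cnj c - f*cnj f)) - (w * ((cnj a*cnj b)*(cnj c*c - cnj f*f)))))"
    using w x(1) by algebra
  finally show ?thesis unfolding x_def[symmetric] by simp
qed

lemma step_R:
  fixes F G F2 G2 :: "complex poly" and e :: real
  assumes dF: "degree F \<le> d" and dG: "degree G \<le> d"
    and ep: "e * e = 1"
    and hF: "\<And>z. norm z = 1 \<Longrightarrow> poly F2 z = poly F z + of_real e * z^(2*d+1) * cnj (poly F (-z))"
    and hG: "\<And>z. norm z = 1 \<Longrightarrow> poly G2 z = poly G z + of_real e * z^(2*d+1) * cnj (poly G (-z))"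
  shows "Re (circ_int_conj (F2 * ptilde F2) (G2 * ptilde G2)) = 2 * Re (circ_int_conj (F * ptilde F) (G * ptilde G))
     + 2 * Re (circ_int_conj (F*G) (F*G)) - 2 * Re (circ_int_conj (F * ptilde G) (F * ptilde G))"
proof -
  have hF': "poly F2 (-z) = poly F (-z) - of_real e * z^(2*d+1) * cnj (poly F z)" if "norm z = 1" for z
    using hF[of "-z"] that by (simp add: power_minus_odd)
  have hG': "poly G2 (-z) = poly G (-z) - of_real e * z^(2*d+1) * cnj (poly G z)" if "norm z = 1" for z
    using hG[of "-z"] that by (simp add: power_minus_odd)
  have eq1: "circ_int_conj (F2 * ptilde F2) (G2 * ptilde G2) = circI (\<lambda>z.
    poly F z * poly F (-z) * cnj (poly G z * poly G (-z)) + cnj (poly F z * poly F (-z)) * (poly G z * poly G (-z))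
  + poly F z * cnj (poly F z) * (poly G z * cnj (poly G z)) - poly F z * cnj (poly F z) * (poly G (-z) * cnj (poly G (-z)))
  - poly F (-z) * cnj (poly F (-z)) * (poly G z * cnj (poly G z)) + poly F (-z) * cnj (poly F (-z)) * (poly G (-z) * cnj (poly G (-z)))
  - cnj (z^(2*d+1)) ^ 2 * (poly F z * poly F (-z) * poly G z * poly G (-z))
  - (z^(2*d+1)) ^ 2 * cnj (poly F z * poly F (-z) * poly G z * poly G (-z))
  + of_real e * ((cnj (z^(2*d+1)) * ((poly F z * cnj (poly F z) - poly F (-z) * cnj (poly F (-z))) * (poly G z * poly G (-z)))
       - cnj (cnj (z^(2*d+1)) * ((poly F z * cnj (poly F z) - poly F (-z) * cnj (poly F (-z))) * (poly G z * poly G (-z)))))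
     - (cnj (z^(2*d+1)) * ((poly F z * poly F (-z)) * (poly G z * cnj (poly G z) - poly G (-z) * cnj (poly G (-z))))
       - cnj (cnj (z^(2*d+1)) * ((poly F z * poly F (-z)) * (poly G z * cnj (poly G z) - poly G (-z) * cnj (poly G (-z))))))))"
    unfolding circI_cic
    apply (rule circI_cong)
    apply (simp only: poly_mult poly_ptilde hF hG hF' hG')
    apply (rule alg_R[OF w_circle ep]; assumption)
    done
  have eq2: "Re (circI (\<lambda>z.
    poly F z * poly F (-z) * cnj (poly G z * poly G (-z)) + cnj (poly F z * poly F (-z)) * (poly G z * poly G (-z))
  + poly F z * cnj (poly F z) * (poly G z * cnj (poly G z)) - poly F z * cnj (poly F z) * (poly G (-z) * cnj (poly G (-z)))
  - poly F (-z) * cnj (poly F (-z)) * (poly G z * cnj (poly G z)) + poly F (-z) * cnj (poly F (-z)) * (poly G (-z) * cnj (poly G (-z)))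
  - cnj (z^(2*d+1)) ^ 2 * (poly F z * poly F (-z) * poly G z * poly G (-z))
  - (z^(2*d+1)) ^ 2 * cnj (poly F z * poly F (-z) * poly G z * poly G (-z))
  + of_real e * ((cnj (z^(2*d+1)) * ((poly F z * cnj (poly F z) - poly F (-z) * cnj (poly F (-z))) * (poly G z * poly G (-z)))
       - cnj (cnj (z^(2*d+1)) * ((poly F z * cnj (poly F z) - poly F (-z) * cnj (poly F (-z))) * (poly G z * poly G (-z)))))
     - (cnj (z^(2*d+1)) * ((poly F z * poly F (-z)) * (poly G z * cnj (poly G z) - poly G (-z) * cnj (poly G (-z))))
       - cnj (cnj (z^(2*d+1)) * ((poly F z * poly F (-z)) * (poly G z * cnj (poly G z) - poly G (-z) * cnj (poly G (-z))))))))) = 2 * Re (circ_int_conj (F * ptilde F) (G * ptilde G))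
     + 2 * Re (circ_int_conj (F*G) (F*G)) - 2 * Re (circ_int_conj (F * ptilde G) (F * ptilde G))"
    apply (subst circI_add circI_diff; (intro continuous_intros)?)+
    apply (subst circI_cmult)+
    apply (subst circI_add circI_diff; (intro continuous_intros)?)+
    apply (simp only: I_P I_Q I_Qs I_Ps I_R I_Rc I_Z[OF dF dG] I_Zc[OF dF dG] circI_cnj)
    apply simp
    done
  show ?thesis unfolding eq1 by (rule eq2)
qed

lemma step_N:
  fixes F F2 :: "complex poly" and e :: real
  assumes dF: "degree F \<le> d"
    and hF: "\<And>z. norm z = 1 \<Longrightarrow> poly F2 z = poly F z + of_real e * z^(2*d+1) * cnj (poly F (-z))"
    and ep: "e * e = 1"
  shows "circ_int_conj F2 F2 = 2 * circ_int_conj F F"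
proof -
  have alg: "(a + of_real e*w*cnj b) * cnj (a + of_real e*w*cnj b) =
      a * cnj a + b * cnj b + of_real e * (cnj w * (a * b) + w * cnj (a * b))"
    if w: "w * cnj w = 1" for a b w :: complex
  proof -
    define x where "x = complex_of_real e"
    have x: "x * x = 1" "cnj x = x" using ep unfolding x_def by (simp_all flip: of_real_mult)
    have "(a + x*w*cnj b) * cnj (a + x*w*cnj b) = (a + x*w*cnj b) * (cnj a + x*cnj w*b)" using x by simp
    also have "\<dots> = a * cnj a + b * cnj b + x * (cnj w * (a * b) + w * (cnj a * cnj b))"
      using w x(1) by algebra
    finally show ?thesis unfolding x_def[symmetric] by simp
  qed
  have "circ_int_conj F2 F2 = circI (\<lambda>z. poly F z * cnj (poly F z) + poly F (-z) * cnj (poly F (-z))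
      + of_real e * (cnj (z^(2*d+1)) * (poly F z * poly F (-z)) + z^(2*d+1) * cnj (poly F z * poly F (-z))))"
    unfolding circI_cic
    apply (rule circI_cong)
    apply (simp only: hF)
    apply (rule alg[OF w_circle]; assumption)
    done
  also have "\<dots> = 2 * circ_int_conj F F"
    apply (subst circI_add; (intro continuous_intros)?)+
    apply (subst circI_cmult)+
    apply (subst circI_add; (intro continuous_intros)?)+
    apply (simp only: I_N I_Ns I_W[OF dF])
    apply simp
    done
  finally show ?thesis .
qed

lemma Hh_eq: "monom 1 (plen p) * ptilde (cdagger p) = Hh p"
  by (simp add: Hh_def)

lemma seq_coeff0:
  assumes frec: "\<And>n. f (Suc n) = f n + smult (complex_of_real (\<sigma> n)) (monom 1 (plen (f n)) * ptilde (cdagger (f n)))"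
  shows "coeff (f n) 0 = coeff (f 0) 0"
proof (induction n)
  case (Suc n)
  have "coeff (f (Suc n)) 0 = coeff (f n) 0"
    by (subst frec) (simp add: coeff_monom_mult plen_def)
  then show ?case using Suc by simp
qed simp

lemma seq_degree:
  assumes frec: "\<And>n. f (Suc n) = f n + smult (complex_of_real (\<sigma> n)) (monom 1 (plen (f n)) * ptilde (cdagger (f n)))"
    and f0: "coeff (f 0) 0 \<noteq> 0" and sigma: "\<And>n. \<sigma> n \<in> {-1, 1}"
  shows "degree (f (Suc n)) = 2 * degree (f n) + 1"
proof -
  let ?d = "degree (f n)"
  have c0: "coeff (f n) 0 \<noteq> 0" using seq_coeff0[where f=f and \<sigma>=\<sigma>, OF frec, of n] f0 by simp
  have s0: "complex_of_real (\<sigma> n) \<noteq> 0" using sigma[of n] by auto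
  have fS: "f (Suc n) = f n + smult (complex_of_real (\<sigma> n)) (Hh (f n))"
    using frec[of n] by (simp add: Hh_eq)
  have le: "degree (f (Suc n)) \<le> 2 * ?d + 1"
    unfolding fS by (rule degree_add_le) (use degree_Hh_le[of "f n"] in \<open>auto intro: order.trans[OF degree_smult_le]\<close>)
  have "coeff (f (Suc n)) (2 * ?d + 1) = complex_of_real (\<sigma> n) * ((-1) ^ ?d * cnj (coeff (f n) 0))"
    unfolding fS using coeff_Hh_top[of "f n"] by (simp add: coeff_eq_0)
  also have "\<dots> \<noteq> 0" using c0 s0 by simp
  finally have "2 * ?d + 1 \<le> degree (f (Suc n))" by (rule le_degree)
  with le show ?thesis by simp
qed

lemma seq_poly:
  assumes frec: "\<And>n. f (Suc n) = f n + smult (complex_of_real (\<sigma> n)) (monom 1 (plen (f n)) * ptilde (cdagger (f n)))"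
    and z: "norm z = 1"
  shows "poly (f (Suc n)) z = poly (f n) z + complex_of_real (\<sigma> n * (-1) ^ degree (f n)) * z ^ (2 * degree (f n) + 1) * cnj (poly (f n) (- z))"
  using poly_step[OF z, of "f n" "\<sigma> n"] frec[of n] by (simp add: Hh_eq)

lemma cic_pos: "coeff p 0 \<noteq> 0 \<Longrightarrow> Re (circ_int_conj p p) > 0"
proof -
  assume c: "coeff p 0 \<noteq> 0"
  have "Re (circ_int_conj p p) = (\<Sum>k\<le>degree p. (cmod (coeff p k))^2)"
    by (simp add: parseval[of p "degree p" p] Re_sum complex_mult_cnj cmod_power2)
  also have "\<dots> \<ge> (cmod (coeff p 0))^2"
    using member_le_sum[where i=0 and A="{..degree p}" and f="\<lambda>k. (cmod (coeff p k))^2"] by simp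
  finally show ?thesis using c by (smt (verit) zero_less_power2 norm_eq_zero)
qed

locale pairseq =
  fixes f g :: "nat \<Rightarrow> complex poly" and \<sigma> :: "nat \<Rightarrow> real"
  assumes len_eq: "plen (f 0) = plen (g 0)"
    and f0: "coeff (f 0) 0 \<noteq> 0" and g0: "coeff (g 0) 0 \<noteq> 0"
    and sigma: "\<And>n. \<sigma> n \<in> {-1, 1}"
    and frec: "\<And>n. f (Suc n) = f n + smult (complex_of_real (\<sigma> n))
                      (monom 1 (plen (f n)) * ptilde (cdagger (f n)))"
    and grec: "\<And>n. g (Suc n) = g n + smult (complex_of_real (\<sigma> n))
                      (monom 1 (plen (g n)) * ptilde (cdagger (g n)))"
begin

lemma deg_eq: "degree (g n) = degree (f n)"
proof (induction n)
  case 0 then show ?case using len_eq by (simp add: plen_def)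
next
  case (Suc n) then show ?case
    using seq_degree[where f=f and \<sigma>=\<sigma>, OF frec f0 sigma] seq_degree[where f=g and \<sigma>=\<sigma>, OF grec g0 sigma] by simp
qed

definition "PP n = Re (circ_int_conj (f n * g n) (f n * g n))"
definition "QQ n = Re (circ_int_conj (f n * ptilde (g n)) (f n * ptilde (g n)))"
definition "RR n = Re (circ_int_conj (f n * ptilde (f n)) (g n * ptilde (g n)))"
definition "NF n = Re (circ_int_conj (f n) (f n))"
definition "NG n = Re (circ_int_conj (g n) (g n))"

lemma eps: "(\<sigma> n * (-1) ^ d) * (\<sigma> n * (-1) ^ d) = 1"
proof -
  have "\<sigma> n * \<sigma> n = 1" using sigma[of n] by auto
  moreover have "((-1::real) ^ d) * (-1) ^ d = 1" by (simp flip: power_add)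
  ultimately show ?thesis by (simp add: algebra_simps)
qed

lemma recs:
  "PP (Suc n) = 2 * PP n + 2 * QQ n + 2 * RR n"
  "QQ (Suc n) = 2 * PP n + 2 * QQ n - 2 * RR n"
  "RR (Suc n) = 2 * PP n - 2 * QQ n + 2 * RR n"
  "NF (Suc n) = 2 * NF n"
  "NG (Suc n) = 2 * NG n"
proof -
  define d where "d = degree (f n)"
  define e where "e = \<sigma> n * (-1) ^ d"
  have ee: "e * e = 1" unfolding e_def by (rule eps)
  have ee2: "(-e) * (-e) = 1" using ee by simp
  have dF: "degree (f n) \<le> d" and dG: "degree (g n) \<le> d" using deg_eq d_def by auto
  have dG': "degree (ptilde (g n)) \<le> d" using dG by (simp add: degree_ptilde)
  have hF: "\<And>z. norm z = 1 \<Longrightarrow> poly (f (Suc n)) z = poly (f n) z + of_real e * z^(2*d+1) * cnj (poly (f n) (-z))"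
    using seq_poly[where f=f and \<sigma>=\<sigma>, OF frec] unfolding e_def d_def by simp
  have hG: "\<And>z. norm z = 1 \<Longrightarrow> poly (g (Suc n)) z = poly (g n) z + of_real e * z^(2*d+1) * cnj (poly (g n) (-z))"
    using seq_poly[where f=g and \<sigma>=\<sigma>, OF grec] deg_eq unfolding e_def d_def by simp
  have hG': "poly (ptilde (g (Suc n))) z = poly (ptilde (g n)) z + of_real (-e) * z^(2*d+1) * cnj (poly (ptilde (g n)) (-z))"
    if z: "norm z = 1" for z
  proof -
    have "norm (-z) = 1" using z by simp
    from hG[OF this] show ?thesis by (simp add: poly_ptilde power_minus_odd)
  qed
  have P: "circ_int_conj (f (Suc n) * g (Suc n)) (f (Suc n) * g (Suc n)) = 2 * circ_int_conj (f n * g n) (f n * g n)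
     + 2 * circ_int_conj (f n * ptilde (g n)) (f n * ptilde (g n))
     + of_real (e*e) * (circ_int_conj (f n * ptilde (f n)) (g n * ptilde (g n)) + cnj (circ_int_conj (f n * ptilde (f n)) (g n * ptilde (g n))))"
    by (rule step_P[OF dF dG ee ee hF hG])
  then show "PP (Suc n) = 2 * PP n + 2 * QQ n + 2 * RR n"
    unfolding PP_def QQ_def RR_def using ee by simp
  have Q: "circ_int_conj (f (Suc n) * ptilde (g (Suc n))) (f (Suc n) * ptilde (g (Suc n))) = 2 * circ_int_conj (f n * ptilde (g n)) (f n * ptilde (g n))
     + 2 * circ_int_conj (f n * ptilde (ptilde (g n))) (f n * ptilde (ptilde (g n)))
     + of_real (e*(-e)) * (circ_int_conj (f n * ptilde (f n)) (ptilde (g n) * ptilde (ptilde (g n))) + cnj (circ_int_conj (f n * ptilde (f n)) (ptilde (g n) * ptilde (ptilde (g n)))))"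
    by (rule step_P[OF dF dG' ee ee2 hF hG'])
  then show "QQ (Suc n) = 2 * PP n + 2 * QQ n - 2 * RR n"
    unfolding PP_def QQ_def RR_def using ee by (simp add: ptilde_ptilde mult.commute[of "ptilde (g n)"])
  show "RR (Suc n) = 2 * PP n - 2 * QQ n + 2 * RR n"
    using step_R[OF dF dG ee hF hG] unfolding PP_def QQ_def RR_def by simp
  show "NF (Suc n) = 2 * NF n"
    using step_N[OF dF hF ee] unfolding NF_def by simp
  show "NG (Suc n) = 2 * NG n"
    using step_N[OF dG hG ee] unfolding NG_def by simp
qed

definition "S0 = 2 * PP 0 + QQ 0 + RR 0"
definition "E0 = PP 0 - S0 / 3"

lemma closed:
  "2 * PP n + QQ n + RR n = 4 ^ n * S0"
  "PP n - (2 * PP n + QQ n + RR n) / 3 = (-2) ^ n * E0"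
  "NF n = 2 ^ n * NF 0" "NG n = 2 ^ n * NG 0"
proof (induction n)
  case 0
  show "2 * PP 0 + QQ 0 + RR 0 = 4 ^ 0 * S0" by (simp add: S0_def)
  show "PP 0 - (2 * PP 0 + QQ 0 + RR 0) / 3 = (-2) ^ 0 * E0" by (simp add: E0_def S0_def)
  show "NF 0 = 2 ^ 0 * NF 0" "NG 0 = 2 ^ 0 * NG 0" by simp_all
next
  case (Suc n)
  show "2 * PP (Suc n) + QQ (Suc n) + RR (Suc n) = 4 ^ Suc n * S0"
    using Suc(1) unfolding recs by (simp add: algebra_simps)
  show "PP (Suc n) - (2 * PP (Suc n) + QQ (Suc n) + RR (Suc n)) / 3 = (-2) ^ Suc n * E0"
    unfolding recs power_Suc mult.assoc using Suc(2) by (simp add: field_simps)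
  show "NF (Suc n) = 2 ^ Suc n * NF 0" "NG (Suc n) = 2 ^ Suc n * NG 0"
    using Suc(3,4) unfolding recs by simp_all
qed

lemma NF0_pos: "NF 0 > 0" unfolding NF_def by (rule cic_pos[OF f0])
lemma NG0_pos: "NG 0 > 0" unfolding NG_def by (rule cic_pos[OF g0])

lemma ratio_limit: "(\<lambda>n. PP n / (NF n * NG n)) \<longlonglongrightarrow> S0 / (3 * NF 0 * NG 0)"
proof -
  have eq: "PP n / (NF n * NG n) = S0 / (3 * NF 0 * NG 0) + (-1/2) ^ n * (E0 / (NF 0 * NG 0))" for n
  proof -
    have p: "PP n = 4 ^ n * S0 / 3 + (-2) ^ n * E0" using closed(1,2)[of n] by (simp add: field_simps)
    have "(4::real) ^ n = 2 ^ n * 2 ^ n" by (simp flip: power_mult_distrib)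
    moreover have "((-2)::real) ^ n = (-1/2) ^ n * (2 ^ n * 2 ^ n)"
      by (simp flip: power_mult_distrib)
    moreover have "NF 0 \<noteq> 0" "NG 0 \<noteq> 0" using NF0_pos NG0_pos by auto
    ultimately show ?thesis unfolding p closed(3,4)[of n] by (simp add: field_simps)
  qed
  have "(\<lambda>n. S0 / (3 * NF 0 * NG 0) + (-1/2::real) ^ n * (E0 / (NF 0 * NG 0))) \<longlonglongrightarrow> S0 / (3 * NF 0 * NG 0) + 0 * (E0 / (NF 0 * NG 0))"
    by (intro tendsto_intros LIMSEQ_power_zero) auto
  then show ?thesis unfolding eq by simp
qed

end

lemma cc_coeff:
  fixes F G :: "complex poly"
  defines "M \<equiv> max (plen F) (plen G)" and "D \<equiv> degree G"
  shows "crosscorr F G (int k - int D) = coeff (F * cdagger G) k"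
proof -
  have DM: "D < M" unfolding M_def D_def plen_def by simp
  have "coeff (F * cdagger G) k = (\<Sum>i\<le>k. coeff F i * coeff (cdagger G) (k - i))"
    by (rule coeff_mult)
  also have "\<dots> = (\<Sum>j<M. icoeff F (int j + (int k - int D)) * cnj (icoeff G (int j)))"
  proof (rule sum.reindex_bij_witness_not_neutral[where S'="{i. i \<le> k \<and> D < k - i}" and T'="{j. j < M \<and> (D < j \<or> j + k < D)}"
      and j="\<lambda>i. if k - i \<le> D then i + D - k else M" and i="\<lambda>j. j + k - D"])
    show "finite {i. i \<le> k \<and> D < k - i}" by simp
    show "finite {j. j < M \<and> (D < j \<or> j + k < D)}" by simp
  next
    fix a assume "a \<in> {..k} - {i. i \<le> k \<and> D < k - i}"
    then show "(if k - a \<le> D then a + D - k else M) + k - D = a" by auto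
  next
    fix a assume "a \<in> {..k} - {i. i \<le> k \<and> D < k - i}"
    then show "(if k - a \<le> D then a + D - k else M) \<in> {..<M} - {j. j < M \<and> (D < j \<or> j + k < D)}"
      using DM by auto
  next
    fix b assume "b \<in> {..<M} - {j. j < M \<and> (D < j \<or> j + k < D)}"
    then show "(if k - (b + k - D) \<le> D then b + k - D + D - k else M) = b" by auto
  next
    fix b assume "b \<in> {..<M} - {j. j < M \<and> (D < j \<or> j + k < D)}"
    then show "b + k - D \<in> {..k} - {i. i \<le> k \<and> D < k - i}" by auto
  next
    fix a assume "a \<in> {i. i \<le> k \<and> D < k - i}"
    then show "coeff F a * coeff (cdagger G) (k - a) = 0" by (simp add: coeff_cdagger D_def)
  next
    fix b assume b: "b \<in> {j. j < M \<and> (D < j \<or> j + k < D)}"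
    show "icoeff F (int b + (int k - int D)) * cnj (icoeff G (int b)) = 0"
    proof (cases "D < b")
      case True then show ?thesis by (simp add: icoeff_def coeff_eq_0 D_def)
    next
      case False then have "b + k < D" using b by auto
      then show ?thesis by (simp add: icoeff_def)
    qed
  next
    fix a assume a: "a \<in> {..k}"
    show "icoeff F (int (if k - a \<le> D then a + D - k else M) + (int k - int D)) *
          cnj (icoeff G (int (if k - a \<le> D then a + D - k else M))) = coeff F a * coeff (cdagger G) (k - a)"
    proof (cases "k - a \<le> D")
      case True
      then have i1: "int (a + D - k) + (int k - int D) = int a" using a by auto
      have i2: "D - (k - a) = a + D - k" using True a by auto
      have c1: "icoeff F (int (a + D - k) + (int k - int D)) = coeff F a"
        by (simp only: i1) (simp add: icoeff_def)
      have c2: "icoeff G (int (a + D - k)) = coeff G (a + D - k)" by (simp add: icoeff_def)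
      have c3: "coeff (cdagger G) (k - a) = cnj (coeff G (a + D - k))"
        using True by (simp add: coeff_cdagger D_def[symmetric] i2)
      show ?thesis using True by (simp only: c1 c2 c3 if_True)
    next
      case False
      then show ?thesis using DM by (simp add: icoeff_def coeff_cdagger D_def coeff_eq_0)
    qed
  qed
  finally show ?thesis unfolding crosscorr_def M_def by simp
qed

lemma cc_zero:
  fixes F G :: "complex poly"
  assumes "s < - int (degree G)"
  shows "crosscorr F G s = 0"
  unfolding crosscorr_def
proof (rule sum.neutral, rule ballI)
  fix j assume "j \<in> {..<max (plen F) (plen G)}"
  show "icoeff F (int j + s) * cnj (icoeff G (int j)) = 0"
  proof (cases "degree G < j")
    case True then show ?thesis by (simp add: icoeff_def coeff_eq_0)
  next
    case False then show ?thesis using assms by (simp add: icoeff_def)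
  qed
qed

lemma cc_sum:
  fixes F G :: "complex poly"
  defines "M \<equiv> max (plen F) (plen G)"
  shows "(\<Sum>s\<in>{- int M .. int M}. (cmod (crosscorr F G s))\<^sup>2) = Re (circ_int_conj (F * G) (F * G))"
proof -
  let ?D = "degree G"
  let ?H = "F * cdagger G"
  have DM: "?D < M" and FM: "degree F < M" unfolding M_def plen_def by auto
  have dH: "degree ?H \<le> M + ?D"
    using degree_mult_le[of F "cdagger G"] degree_cdagger_le[of G] FM by linarith
  have "(\<Sum>s\<in>{- int M .. int M}. (cmod (crosscorr F G s))\<^sup>2) = (\<Sum>k\<le>M + ?D. (cmod (coeff ?H k))\<^sup>2)"
  proof (rule sum.reindex_bij_witness_not_neutral[where S'="{s. - int M \<le> s \<and> s < - int ?D}" and T'="{}"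
      and j="\<lambda>s. if - int ?D \<le> s then nat (s + int ?D) else M + ?D + 1" and i="\<lambda>k. int k - int ?D"])
    show "finite {s. - int M \<le> s \<and> s < - int ?D}" by simp
  next
    fix a assume "a \<in> {- int M..int M} - {s. - int M \<le> s \<and> s < - int ?D}"
    then show "int (if - int ?D \<le> a then nat (a + int ?D) else M + ?D + 1) - int ?D = a" by auto
  next
    fix a assume "a \<in> {- int M..int M} - {s. - int M \<le> s \<and> s < - int ?D}"
    then show "(if - int ?D \<le> a then nat (a + int ?D) else M + ?D + 1) \<in> {..M + ?D} - {}" by auto
  next
    fix b assume "b \<in> {..M + ?D} - {}"
    then show "(if - int ?D \<le> int b - int ?D then nat (int b - int ?D + int ?D) else M + ?D + 1) = b" by auto
  next
    fix b assume "b \<in> {..M + ?D} - {}"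
    then show "int b - int ?D \<in> {- int M..int M} - {s. - int M \<le> s \<and> s < - int ?D}" using DM by auto
  next
    fix a assume "a \<in> {s. - int M \<le> s \<and> s < - int ?D}"
    then show "(cmod (crosscorr F G a))\<^sup>2 = 0" by (simp add: cc_zero)
  next
    fix b assume "b \<in> ({}::nat set)" then show "(cmod (coeff ?H b))\<^sup>2 = 0" by simp
  next
    fix a assume a: "a \<in> {- int M..int M}"
    show "(cmod (coeff ?H (if - int ?D \<le> a then nat (a + int ?D) else M + ?D + 1)))\<^sup>2 = (cmod (crosscorr F G a))\<^sup>2"
    proof (cases "- int ?D \<le> a")
      case True
      then have "a = int (nat (a + int ?D)) - int ?D" by simp
      then have "crosscorr F G a = coeff ?H (nat (a + int ?D))"
        by (metis cc_coeff)
      with True show ?thesis by simp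
    next
      case False
      then show ?thesis using dH by (simp add: cc_zero coeff_eq_0)
    qed
  qed simp
  also have "\<dots> = Re (circ_int_conj ?H ?H)"
    by (simp add: parseval[OF dH dH] Re_sum complex_mult_cnj cmod_power2)
  also have "circ_int_conj ?H ?H = circ_int_conj (F * G) (F * G)"
    unfolding circI_cic
  proof (rule circI_cong)
    fix z :: complex assume z: "norm z = 1"
    have w0: "z ^ ?D * cnj (z ^ ?D) = 1" by (rule w_circle[OF z])
    then have w: "z ^ ?D * cnj z ^ ?D = 1" by simp
    have "poly ?H z * cnj (poly ?H z) = poly F z * cnj (poly F z) * (poly G z * cnj (poly G z)) * (z ^ ?D * cnj (z ^ ?D))"
      by (simp add: poly_cdagger[OF z] mult_ac)
    also have "\<dots> = poly (F * G) z * cnj (poly (F * G) z)" by (simp add: w mult_ac)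
    finally show "poly ?H z * cnj (poly ?H z) = poly (F * G) z * cnj (poly (F * G) z)" .
  qed
  finally show ?thesis .
qed

lemma cc_self: "crosscorr F F 0 = circ_int_conj F F"
proof -
  have "crosscorr F F 0 = (\<Sum>j<Suc (degree F). coeff F j * cnj (coeff F j))"
    unfolding crosscorr_def plen_def by (simp add: icoeff_def)
  also have "\<dots> = circ_int_conj F F"
    by (simp add: parseval[of F "degree F" F] lessThan_Suc_atMost)
  finally show ?thesis .
qed

lemma cic_self_real: "circ_int_conj F F = complex_of_real (Re (circ_int_conj F F))" "Re (circ_int_conj F F) \<ge> 0"
proof -
  have e: "circ_int_conj F F = complex_of_real (\<Sum>k\<le>degree F. (cmod (coeff F k))\<^sup>2)"
    by (simp add: parseval[of F "degree F" F] complex_mult_cnj cmod_power2)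
  then show "circ_int_conj F F = complex_of_real (Re (circ_int_conj F F))" by simp
  show "Re (circ_int_conj F F) \<ge> 0" unfolding e by (simp add: sum_nonneg)
qed

lemma cmod_cc_self: "cmod (crosscorr F F 0) = Re (circ_int_conj F F)"
  unfolding cc_self by (subst cic_self_real(1)) (simp add: cic_self_real(2))

lemma CDF_eq: "CDF F G = Re (circ_int_conj (F * G) (F * G)) / (Re (circ_int_conj F F) * Re (circ_int_conj G G))"
  unfolding CDF_def cc_sum cmod_cc_self ..

lemma circI_const: "circI (\<lambda>z. k) = k"
proof -
  have "integral {0..2*pi} (\<lambda>t. k) = complex_of_real (2*pi) * k"
    by (simp add: scaleR_conv_of_real)
  then show ?thesis unfolding circI_def by simp
qed

lemma cic_real_int:
  "Re (circ_int_conj p p) = 1 / (2 * pi) * integral {0..2*pi} (\<lambda>t. (cmod (poly p (cis t)))\<^sup>2)"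
proof -
  have "circ_int_conj p p = circI (\<lambda>z. complex_of_real ((cmod (poly p z))\<^sup>2))"
    unfolding circI_cic by (rule circI_cong) (rule complex_norm_square[symmetric])
  also have "\<dots> = complex_of_real (1 / (2 * pi) * integral {0..2*pi} (\<lambda>t. (cmod (poly p (cis t)))\<^sup>2))"
    by (rule circI_real) (intro continuous_intros)
  finally show ?thesis by simp
qed

lemma lp2: "(lpnorm 2 p)\<^sup>2 = Re (circ_int_conj p p)"
proof -
  have nn: "Re (circ_int_conj p p) \<ge> 0"
    using parseval[of p "degree p" p] by (simp add: Re_sum complex_mult_cnj sum_nonneg)
  have "lpnorm 2 p = (Re (circ_int_conj p p)) powr (1/2)"
    unfolding lpnorm_def cic_real_int by simp
  also have "\<dots> = sqrt (Re (circ_int_conj p p))" using nn by (simp add: powr_half_sqrt)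
  finally show ?thesis using nn by simp
qed

lemma lp4: "(lpnorm 4 p) ^ 4 = Re (circ_int_conj (p * p) (p * p))"
proof -
  have nn: "Re (circ_int_conj (p*p) (p*p)) \<ge> 0"
    using parseval[of "p*p" "degree (p*p)" "p*p"] by (simp add: Re_sum complex_mult_cnj sum_nonneg)
  have i: "(\<lambda>t. cmod (poly p (cis t)) powr 4) = (\<lambda>t. (cmod (poly (p*p) (cis t)))\<^sup>2)"
    by (rule ext) (simp add: norm_mult power_mult_distrib flip: power_add)
  have "lpnorm 4 p = (Re (circ_int_conj (p*p) (p*p))) powr (1/4)"
    unfolding lpnorm_def i cic_real_int by simp
  then have "(lpnorm 4 p) ^ 4 = ((Re (circ_int_conj (p*p) (p*p))) powr (1/4)) ^ 4" by simp
  also have "\<dots> = Re (circ_int_conj (p*p) (p*p))"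
  proof (cases "Re (circ_int_conj (p*p) (p*p)) = 0")
    case True then show ?thesis by simp
  next
    case False
    then show ?thesis using nn by (simp add: powr_power powr_one)
  qed
  finally show ?thesis .
qed

lemma nsq: "(complex_of_real (cmod x))\<^sup>2 = x * cnj x"
  by (metis complex_norm_square of_real_power)

lemma ineq:
  "Re (circ_int_conj (F*F) (F*F)) + Re (circ_int_conj (F * ptilde F) (F * ptilde F)) \<ge> 2 * (Re (circ_int_conj F F))\<^sup>2"
proof -
  define N where "N = Re (circ_int_conj F F)"
  define h where "h = (\<lambda>z. (cmod (poly F z))\<^sup>2 + (cmod (poly F (-z)))\<^sup>2)"
  have ch: "continuous_on UNIV h" unfolding h_def by (intro continuous_intros)
  have cN: "circ_int_conj F F = complex_of_real N" unfolding N_def by (rule cic_self_real(1))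
  have h1: "circI (\<lambda>z. complex_of_real (h z)) = complex_of_real (2 * N)"
  proof -
    have "circI (\<lambda>z. complex_of_real (h z)) = circI (\<lambda>z. poly F z * cnj (poly F z) + poly F (-z) * cnj (poly F (-z)))"
      unfolding h_def by (rule circI_cong) (simp add: nsq)
    also have "\<dots> = 2 * circ_int_conj F F"
      by (subst circI_add) (intro continuous_intros, intro continuous_intros, simp add: I_N I_Ns)
    finally show ?thesis using cN by simp
  qed
  have h2: "circI (\<lambda>z. complex_of_real ((h z)\<^sup>2)) = 2 * circ_int_conj (F*F) (F*F) + 2 * circ_int_conj (F * ptilde F) (F * ptilde F)"
  proof -
    have "circI (\<lambda>z. complex_of_real ((h z)\<^sup>2)) = circI (\<lambda>z.
        poly F z * cnj (poly F z) * (poly F z * cnj (poly F z)) + poly F z * cnj (poly F z) * (poly F (-z) * cnj (poly F (-z)))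
      + poly F (-z) * cnj (poly F (-z)) * (poly F z * cnj (poly F z)) + poly F (-z) * cnj (poly F (-z)) * (poly F (-z) * cnj (poly F (-z))))"
      apply (rule circI_cong)
      subgoal for z
      proof -
        have e: "complex_of_real (h z) = poly F z * cnj (poly F z) + poly F (-z) * cnj (poly F (-z))"
          unfolding h_def by (simp add: nsq)
        show ?thesis unfolding of_real_power e by (simp add: power2_eq_square algebra_simps)
      qed
      done
    also have "\<dots> = 2 * circ_int_conj (F*F) (F*F) + 2 * circ_int_conj (F * ptilde F) (F * ptilde F)"
      apply (subst circI_add; (intro continuous_intros)?)+
      apply (simp only: I_P I_Q I_Qs I_Ps)
      apply simp
      done
    finally show ?thesis .
  qed
  have nn: "0 \<le> 1 / (2 * pi) * integral {0..2*pi} (\<lambda>t. (h (cis t) - 2 * N)\<^sup>2)"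
  proof -
    have "continuous_on {0..2*pi} (\<lambda>t. (h (cis t) - 2 * N)\<^sup>2)"
      by (intro continuous_intros continuous_on_compose2[OF ch cont_cis]) auto
    then have "0 \<le> integral {0..2*pi} (\<lambda>t. (h (cis t) - 2 * N)\<^sup>2)"
      by (intro integral_nonneg integrable_continuous_real) auto
    then show ?thesis by simp
  qed
  have "complex_of_real (1 / (2 * pi) * integral {0..2*pi} (\<lambda>t. (h (cis t) - 2 * N)\<^sup>2))
      = circI (\<lambda>z. complex_of_real ((h z - 2 * N)\<^sup>2))"
    by (rule circI_real[symmetric]) (intro continuous_intros ch)
  also have "\<dots> = circI (\<lambda>z. complex_of_real ((h z)\<^sup>2) - complex_of_real (4 * N) * complex_of_real (h z) + complex_of_real (4 * N\<^sup>2))"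
    by (rule circI_cong) (simp add: power2_eq_square algebra_simps)
  also have "\<dots> = circI (\<lambda>z. complex_of_real ((h z)\<^sup>2)) - complex_of_real (4 * N) * circI (\<lambda>z. complex_of_real (h z)) + complex_of_real (4 * N\<^sup>2)"
    apply (subst circI_add; (intro continuous_intros ch)?)
    apply (subst circI_diff; (intro continuous_intros ch)?)
    apply (simp add: circI_cmult circI_const)
    done
  finally have A: "complex_of_real (1 / (2 * pi) * integral {0..2*pi} (\<lambda>t. (h (cis t) - 2 * N)\<^sup>2)) =
     circI (\<lambda>z. complex_of_real ((h z)\<^sup>2)) - complex_of_real (4 * N) * circI (\<lambda>z. complex_of_real (h z)) + complex_of_real (4 * N\<^sup>2)" .
  have "0 \<le> Re (circI (\<lambda>z. complex_of_real ((h z)\<^sup>2)) - complex_of_real (4 * N) * circI (\<lambda>z. complex_of_real (h z)) + complex_of_real (4 * N\<^sup>2))"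
    using arg_cong[OF A, of Re] nn by simp
  then have "0 \<le> 2 * Re (circ_int_conj (F*F) (F*F)) + 2 * Re (circ_int_conj (F * ptilde F) (F * ptilde F)) - 4 * N\<^sup>2"
    unfolding h1 h2 by (simp add: power2_eq_square)
  then show ?thesis unfolding N_def by simp
qed

lemma pair_main:
  assumes "pairseq f g \<sigma>"
  shows "(\<lambda>n. CDF (f n) (g n)) \<longlonglongrightarrow> (2 * Re (circ_int_conj (f 0 * g 0) (f 0 * g 0)) + Re (circ_int_conj (f 0 * ptilde (g 0)) (f 0 * ptilde (g 0)))
     + Re (circ_int_conj (f 0 * ptilde (f 0)) (g 0 * ptilde (g 0)))) / (3 * Re (circ_int_conj (f 0) (f 0)) * Re (circ_int_conj (g 0) (g 0)))"
proof -
  interpret pairseq f g \<sigma> by fact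
  have e: "CDF (f n) (g n) = PP n / (NF n * NG n)" for n by (simp add: CDF_eq PP_def NF_def NG_def)
  show ?thesis using ratio_limit unfolding e S0_def PP_def QQ_def RR_def NF_def NG_def by (simp add: mult.assoc)
qed

lemma adf_form:
  fixes P Q N :: real
  assumes "N > 0"
  shows "(2 * P + Q + Q) / (3 * N * N) - 1 = -1 + 2/3 * (P + Q) / N\<^sup>2"
  using assms by (simp add: field_simps power2_eq_square)

lemma sqrt_helper:
  fixes Pf Qf Nf Pg Qg Ng :: real
  assumes nf: "Nf > 0" and ng: "Ng > 0"
  shows "sqrt ((-1 + 2/3 * (Pf + Qf) / Nf\<^sup>2) * (-1 + 2/3 * (Pg + Qg) / Ng\<^sup>2))
       = sqrt ((2 * Pf + 2 * Qf - 3 * Nf\<^sup>2) * (2 * Pg + 2 * Qg - 3 * Ng\<^sup>2)) / (3 * Nf * Ng)"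
proof -
  have "(-1 + 2/3 * (Pf + Qf) / Nf\<^sup>2) * (-1 + 2/3 * (Pg + Qg) / Ng\<^sup>2)
      = ((2 * Pf + 2 * Qf - 3 * Nf\<^sup>2) * (2 * Pg + 2 * Qg - 3 * Ng\<^sup>2)) / (3 * Nf * Ng)\<^sup>2"
    using nf ng by (simp add: field_simps power2_eq_square)
  moreover have "sqrt ((3 * Nf * Ng)\<^sup>2) = 3 * Nf * Ng" using nf ng by simp
  ultimately show ?thesis by (simp add: real_sqrt_divide)
qed

theorem corollary2p7:
  fixes f g :: "nat \<Rightarrow> complex poly" and \<sigma> :: "nat \<Rightarrow> real"
  assumes len_eq: "plen (f 0) = plen (g 0)"
    and f0: "coeff (f 0) 0 \<noteq> 0" and g0: "coeff (g 0) 0 \<noteq> 0"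
    and sigma: "\<And>n. \<sigma> n \<in> {-1, 1}"
    and frec: "\<And>n. f (Suc n) = f n + smult (complex_of_real (\<sigma> n))
                      (monom 1 (plen (f n)) * ptilde (cdagger (f n)))"
    and grec: "\<And>n. g (Suc n) = g n + smult (complex_of_real (\<sigma> n))
                      (monom 1 (plen (g n)) * ptilde (cdagger (g n)))"
  shows
    "((\<lambda>n. ADF (f n)) \<longlonglongrightarrow>
        -1 + 2/3 * ((lpnorm 4 (f 0))^4 + (lpnorm 2 (f 0 * ptilde (f 0)))^2) / (lpnorm 2 (f 0))^4)
   \<and> (-1 + 2/3 * ((lpnorm 4 (f 0))^4 + (lpnorm 2 (f 0 * ptilde (f 0)))^2) / (lpnorm 2 (f 0))^4 \<ge> 1/3)
   \<and> ((\<lambda>n. ADF (g n)) \<longlonglongrightarrow>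
        -1 + 2/3 * ((lpnorm 4 (g 0))^4 + (lpnorm 2 (g 0 * ptilde (g 0)))^2) / (lpnorm 2 (g 0))^4)
   \<and> (-1 + 2/3 * ((lpnorm 4 (g 0))^4 + (lpnorm 2 (g 0 * ptilde (g 0)))^2) / (lpnorm 2 (g 0))^4 \<ge> 1/3)
   \<and> ((\<lambda>n. CDF (f n) (g n)) \<longlonglongrightarrow>
        (2 * (lpnorm 2 (f 0 * g 0))^2 + (lpnorm 2 (f 0 * ptilde (g 0)))^2
          + Re (circ_int_conj (f 0 * ptilde (f 0)) (g 0 * ptilde (g 0))))
        / (3 * (lpnorm 2 (f 0))^2 * (lpnorm 2 (g 0))^2))
   \<and> ((\<lambda>n. PSC (f n) (g n)) \<longlonglongrightarrow>
        (2 * (lpnorm 2 (f 0 * g 0))^2 + (lpnorm 2 (f 0 * ptilde (g 0)))^2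
          + Re (circ_int_conj (f 0 * ptilde (f 0)) (g 0 * ptilde (g 0))))
        / (3 * (lpnorm 2 (f 0))^2 * (lpnorm 2 (g 0))^2)
      + sqrt ((2 * (lpnorm 4 (f 0))^4 + 2 * (lpnorm 2 (f 0 * ptilde (f 0)))^2 - 3 * (lpnorm 2 (f 0))^4)
            * (2 * (lpnorm 4 (g 0))^4 + 2 * (lpnorm 2 (g 0 * ptilde (g 0)))^2 - 3 * (lpnorm 2 (g 0))^4))
        / (3 * (lpnorm 2 (f 0))^2 * (lpnorm 2 (g 0))^2))"
proof -
  have pfg: "pairseq f g \<sigma>" by (unfold_locales; fact)
  have pff: "pairseq f f \<sigma>" by (unfold_locales; (fact | rule refl))
  have pgg: "pairseq g g \<sigma>" by (unfold_locales; (fact | rule refl))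
  define Pf where "Pf = Re (circ_int_conj (f 0 * f 0) (f 0 * f 0))"
  define Qf where "Qf = Re (circ_int_conj (f 0 * ptilde (f 0)) (f 0 * ptilde (f 0)))"
  define Nf where "Nf = Re (circ_int_conj (f 0) (f 0))"
  define Pg where "Pg = Re (circ_int_conj (g 0 * g 0) (g 0 * g 0))"
  define Qg where "Qg = Re (circ_int_conj (g 0 * ptilde (g 0)) (g 0 * ptilde (g 0)))"
  define Ng where "Ng = Re (circ_int_conj (g 0) (g 0))"
  define Pc where "Pc = Re (circ_int_conj (f 0 * g 0) (f 0 * g 0))"
  define Qc where "Qc = Re (circ_int_conj (f 0 * ptilde (g 0)) (f 0 * ptilde (g 0)))"
  define Rc where "Rc = Re (circ_int_conj (f 0 * ptilde (f 0)) (g 0 * ptilde (g 0)))"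
  have nf: "Nf > 0" unfolding Nf_def by (rule cic_pos[OF f0])
  have ng: "Ng > 0" unfolding Ng_def by (rule cic_pos[OF g0])
  have l1: "(lpnorm 4 (f 0))^4 = Pf" "(lpnorm 4 (g 0))^4 = Pg" unfolding Pf_def Pg_def by (rule lp4)+
  have l2: "(lpnorm 2 (f 0 * ptilde (f 0)))\<^sup>2 = Qf" "(lpnorm 2 (g 0 * ptilde (g 0)))\<^sup>2 = Qg"
    "(lpnorm 2 (f 0 * g 0))\<^sup>2 = Pc" "(lpnorm 2 (f 0 * ptilde (g 0)))\<^sup>2 = Qc"
    "(lpnorm 2 (f 0))\<^sup>2 = Nf" "(lpnorm 2 (g 0))\<^sup>2 = Ng"
    unfolding Qf_def Qg_def Pc_def Qc_def Nf_def Ng_def by (rule lp2)+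
  have l3: "(lpnorm 2 (f 0))^4 = Nf\<^sup>2" "(lpnorm 2 (g 0))^4 = Ng\<^sup>2"
    using l2(5,6) by (metis power_mult numeral_times_numeral semiring_norm(12) mult_2_right numeral_Bit0)+
  have rc: "Re (circ_int_conj (f 0 * ptilde (f 0)) (g 0 * ptilde (g 0))) = Rc" unfolding Rc_def ..
  have limF: "(\<lambda>n. ADF (f n)) \<longlonglongrightarrow> -1 + 2/3 * (Pf + Qf) / Nf\<^sup>2"
  proof -
    have "(\<lambda>n. CDF (f n) (f n) - 1) \<longlonglongrightarrow> (2 * Pf + Qf + Qf) / (3 * Nf * Nf) - 1"
      using pair_main[OF pff] unfolding Pf_def Qf_def Nf_def by (intro tendsto_intros) simp
    then show ?thesis unfolding ADF_def adf_form[OF nf] .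
  qed
  have limG: "(\<lambda>n. ADF (g n)) \<longlonglongrightarrow> -1 + 2/3 * (Pg + Qg) / Ng\<^sup>2"
  proof -
    have "(\<lambda>n. CDF (g n) (g n) - 1) \<longlonglongrightarrow> (2 * Pg + Qg + Qg) / (3 * Ng * Ng) - 1"
      using pair_main[OF pgg] unfolding Pg_def Qg_def Ng_def by (intro tendsto_intros) simp
    then show ?thesis unfolding ADF_def adf_form[OF ng] .
  qed
  have limC: "(\<lambda>n. CDF (f n) (g n)) \<longlonglongrightarrow> (2 * Pc + Qc + Rc) / (3 * Nf * Ng)"
    using pair_main[OF pfg] unfolding Pc_def Qc_def Rc_def Nf_def Ng_def .
  have geF: "-1 + 2/3 * (Pf + Qf) / Nf\<^sup>2 \<ge> 1/3"
  proof -
    have "Pf + Qf \<ge> 2 * Nf\<^sup>2" using ineq[of "f 0"] unfolding Pf_def Qf_def Nf_def .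
    then show ?thesis using nf by (simp add: field_simps)
  qed
  have geG: "-1 + 2/3 * (Pg + Qg) / Ng\<^sup>2 \<ge> 1/3"
  proof -
    have "Pg + Qg \<ge> 2 * Ng\<^sup>2" using ineq[of "g 0"] unfolding Pg_def Qg_def Ng_def .
    then show ?thesis using ng by (simp add: field_simps)
  qed
  have limP: "(\<lambda>n. PSC (f n) (g n)) \<longlonglongrightarrow> (2 * Pc + Qc + Rc) / (3 * Nf * Ng)
      + sqrt ((2 * Pf + 2 * Qf - 3 * Nf\<^sup>2) * (2 * Pg + 2 * Qg - 3 * Ng\<^sup>2)) / (3 * Nf * Ng)"
  proof -
    have "(\<lambda>n. sqrt (ADF (f n) * ADF (g n)) + CDF (f n) (g n)) \<longlonglongrightarrow>
       sqrt ((-1 + 2/3 * (Pf + Qf) / Nf\<^sup>2) * (-1 + 2/3 * (Pg + Qg) / Ng\<^sup>2)) + (2 * Pc + Qc + Rc) / (3 * Nf * Ng)"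
      by (intro tendsto_intros limF limG limC)
    then show ?thesis unfolding PSC_def sqrt_helper[OF nf ng] by (simp add: add.commute)
  qed
  show ?thesis
    unfolding l1 l2 l3 rc
    using limF limG limC limP geF geG by (simp add: mult.assoc)
qed

end
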